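(* Let $\mathfrak S=(\mathcal S,\mathcal U,T_{\mathfrak s})$ be a controlled Markov process, $\mathcal P=\langle B_1,\dots,B_\ell\rangle$ a partition of $\mathcal S$ into measurable sets, $s^0\in\mathcal S$ an initial state and $\rho$ a stationary control policy. Suppose that for every finite path $(s^0,\dots,s^n)\in\mathcal S^{n+1}$ of $\mathfrak S$ starting at $s^0$ and every odd $i\in\{1,\dots,\ell\}$, $$s^n\in B_i\implies P_{s^n}^{\rho}\Big(\mathfrak S\models\lozenge\big(\square\neg B_i\vee\textstyle\bigvee_{j\text{ even},\,j\in\{i+1,\dots,\ell\}}B_j\big)\Big)=1.$$ Then $P_{s^0}^{\rho}(\mathfrak S\models\mathit{Parity}(\mathcal P))=1$.
   Context: CMP: $\mathfrak S=(\mathcal S,\mathcal U,T_{\mathfrak s})$ with $\mathcal S$ a Borel space, $\mathcal U$ a finite input set, $T_{\mathfrak s}(\cdot\mid s,u)$ a probability measure on the Borel sets of $\mathcal S$. A stationary policy is a universally measurable $\rho:\mathcal S\to\mathcal U$; $P_s^\rho$ is the induced probability measure on infinite paths $(s^0,s^1,\dots)$ with $s^0=s$ and $s^{k+1}\sim T_{\mathfrak s}(\cdot\mid s^k,\rho(s^k))$. A finite path of length $n+1$ is any sequence $(s^0,\dots,s^n)$ of states. Temporal operators have LTL semantics on infinite paths: $\lozenge\phi$ means $\phi$ holds at some suffix; $\square\neg B_i$ means $B_i$ is never visited from that point on; a set $B_j$ as a formula holds at a position if the current state is in $B_j$. $\mathit{Parity}(\mathcal P)$ holds on a path iff for every odd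 $i$, if $B_i$ is visited infinitely often then $B_j$ is visited infinitely often for some even $j\in\{i+1,\dots,\ell\}$. *)

theory Defs
  imports "HOL-Probability.Probability"
begin

text \<open>Controlled Markov process: state space a Borel space (a Polish type with its Borel
sigma-algebra), finite input type, transition kernel T s u, a probability measure on the
Borel sets, Borel measurable in s for each fixed input.\<close>

definition is_cmp :: "('s::polish_space \<Rightarrow> 'u::finite \<Rightarrow> 's measure) \<Rightarrow> bool" where
  "is_cmp T \<longleftrightarrow> (\<forall>u. (\<lambda>s. T s u) \<in> borel \<rightarrow>\<^sub>M prob_algebra borel)"

definition universally_measurable :: "('s::topological_space \<Rightarrow> 'u) \<Rightarrow> bool" where
  "universally_measurable f \<longleftrightarrow>
     (\<forall>\<mu>. sets \<mu> = sets borel \<and> prob_space \<mu> \<longrightarrow> f \<in> measurable (completion \<mu>) (count_space UNIV))"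

text \<open>Probability of the cylinder  s^0 in A 0, ..., s^n in A n  for the chain started at s
under the stationary policy rho.\<close>
fun path_cyl :: "('s \<Rightarrow> 'u \<Rightarrow> 's measure) \<Rightarrow> ('s \<Rightarrow> 'u) \<Rightarrow> nat \<Rightarrow> (nat \<Rightarrow> 's set) \<Rightarrow> 's \<Rightarrow> ennreal" where
  "path_cyl T \<rho> 0 A s = indicator (A 0) s"
| "path_cyl T \<rho> (Suc n) A s =
     indicator (A 0) s * (\<integral>\<^sup>+ t. path_cyl T \<rho> n (\<lambda>k. A (Suc k)) t \<partial>(T s (\<rho> s)))"

definition is_path_measure ::
  "('s::topological_space \<Rightarrow> 'u \<Rightarrow> 's measure) \<Rightarrow> ('s \<Rightarrow> 'u) \<Rightarrow> ('s \<Rightarrow> 's stream measure) \<Rightarrow> bool" where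
  "is_path_measure T \<rho> P \<longleftrightarrow>
     (\<forall>s. sets (P s) = sets (stream_space borel) \<and> prob_space (P s) \<and>
        (\<forall>n A. (\<forall>k. A k \<in> sets borel) \<longrightarrow>
           emeasure (P s) {\<omega> \<in> space (P s). \<forall>k\<le>n. \<omega> !! k \<in> A k} = path_cyl T \<rho> n A s))"

definition is_meas_partition :: "nat \<Rightarrow> (nat \<Rightarrow> 's::topological_space set) \<Rightarrow> bool" where
  "is_meas_partition l B \<longleftrightarrow>
     (\<forall>i\<in>{1..l}. B i \<in> sets borel) \<and>
     (\<Union>i\<in>{1..l}. B i) = UNIV \<and>
     (\<forall>i\<in>{1..l}. \<forall>j\<in>{1..l}. i \<noteq> j \<longrightarrow> B i \<inter> B j = {})"

definition ev_escape :: "nat \<Rightarrow> (nat \<Rightarrow> 's set) \<Rightarrow> nat \<Rightarrow> 's stream \<Rightarrow> bool" where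
  "ev_escape l B i \<omega> \<longleftrightarrow>
     (\<exists>k. (\<forall>m\<ge>k. \<omega> !! m \<notin> B i) \<or> (\<exists>j. even j \<and> i < j \<and> j \<le> l \<and> \<omega> !! k \<in> B j))"

definition parity :: "nat \<Rightarrow> (nat \<Rightarrow> 's set) \<Rightarrow> 's stream \<Rightarrow> bool" where
  "parity l B \<omega> \<longleftrightarrow>
     (\<forall>i. odd i \<and> 1 \<le> i \<and> i \<le> l \<longrightarrow> (\<exists>\<^sub>\<infinity>n. \<omega> !! n \<in> B i) \<longrightarrow>
        (\<exists>j. even j \<and> i < j \<and> j \<le> l \<and> (\<exists>\<^sub>\<infinity>n. \<omega> !! n \<in> B j)))"

end

theory Submission
  imports Defs
begin

definition umeas :: "('s::topological_space \<Rightarrow> ennreal) \<Rightarrow> bool" where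
  "umeas f \<longleftrightarrow> (\<forall>\<mu>. sets \<mu> = sets borel \<and> prob_space \<mu> \<longrightarrow> f \<in> borel_measurable (completion \<mu>))"

lemma K_meas:
  fixes T :: "'s::polish_space \<Rightarrow> 'u::finite \<Rightarrow> 's measure"
  assumes "is_cmp T" "universally_measurable \<rho>" "sets \<mu> = sets borel" "prob_space \<mu>"
  shows "(\<lambda>t. T t (\<rho> t)) \<in> completion \<mu> \<rightarrow>\<^sub>M prob_algebra borel"
proof (rule measurable_compose_countable'[where I=UNIV and g=\<rho> and f="\<lambda>u t. T t u"])
  fix u :: 'u
  have "(\<lambda>t. T t u) \<in> borel \<rightarrow>\<^sub>M prob_algebra borel" using assms(1) by (simp add: is_cmp_def)
  then have "(\<lambda>t. T t u) \<in> \<mu> \<rightarrow>\<^sub>M prob_algebra borel" using assms(3) by (simp cong: measurable_cong_sets)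
  then show "(\<lambda>t. T t u) \<in> completion \<mu> \<rightarrow>\<^sub>M prob_algebra borel" by (rule measurable_completion)
next
  show "\<rho> \<in> completion \<mu> \<rightarrow>\<^sub>M count_space UNIV" using assms(2-4) by (simp add: universally_measurable_def)
qed simp

lemma ae_meas:
  fixes f h :: "'a \<Rightarrow> 'b::topological_space"
  assumes h: "h \<in> borel_measurable (completion M)" and ae: "AE x in completion M. f x = h x"
  shows "f \<in> borel_measurable (completion M)"
proof (rule measurableI)
  fix A :: "'b set" assume A: "A \<in> sets borel"
  show "f -` A \<inter> space (completion M) \<in> sets (completion M)"
  proof (rule completion.in_sets_AE)
    show "h -` A \<inter> space (completion M) \<in> sets (completion M)" using h A by (rule measurable_sets)
    show "AE x in completion M. (x \<in> h -` A \<inter> space (completion M)) = (x \<in> f -` A \<inter> space (completion M))"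
      using ae by eventually_elim auto
  qed auto
qed auto

lemma um_int:
  fixes T :: "'s::polish_space \<Rightarrow> 'u::finite \<Rightarrow> 's measure"
  assumes cmp: "is_cmp T" and rho: "universally_measurable \<rho>" and f: "umeas f"
  shows "umeas (\<lambda>s. \<integral>\<^sup>+t. f t \<partial>(T s (\<rho> s)))"
  unfolding umeas_def
proof (intro allI impI, elim conjE)
  fix \<mu> :: "'s measure" assume s\<mu>: "sets \<mu> = sets borel" and p\<mu>: "prob_space \<mu>"
  have Kc: "(\<lambda>t. T t (\<rho> t)) \<in> completion \<mu> \<rightarrow>\<^sub>M prob_algebra borel"
    using K_meas[OF cmp rho s\<mu> p\<mu>] .
  have cm: "completion \<mu> \<in> space (prob_algebra (completion \<mu>))"
    using p\<mu> by (simp add: space_prob_algebra prob_space.prob_space_completion)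
  define \<nu> where "\<nu> = bind (completion \<mu>) (\<lambda>t. T t (\<rho> t))"
  have s\<nu>: "sets \<nu> = sets borel" unfolding \<nu>_def by (rule sets_bind'[OF cm Kc])
  have p\<nu>: "prob_space \<nu>" unfolding \<nu>_def by (rule prob_space_bind'[OF cm Kc])
  have "f \<in> borel_measurable (completion \<nu>)" using f s\<nu> p\<nu> by (simp add: umeas_def)
  then obtain g where g: "g \<in> borel_measurable \<nu>" and ae: "AE x in \<nu>. f x = g x"
    using completion_ex_borel_measurable by blast
  have gb: "g \<in> borel_measurable borel" using g s\<nu> by (simp cong: measurable_cong_sets)
  obtain N where N: "N \<in> null_sets \<nu>" "{x\<in>space \<nu>. \<not> f x = g x} \<subseteq> N"
    using ae by (auto elim!: AE_E)
  have Nb: "N \<in> sets borel" using N(1) s\<nu> by (auto simp: null_sets_def)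
  have "AE x in \<nu>. x \<notin> N" using N(1) by (rule AE_not_in)
  then have "AE s in completion \<mu>. AE t in T s (\<rho> s). t \<notin> N"
    unfolding \<nu>_def using Nb
    by (subst (asm) AE_bind[OF measurable_prob_algebraD[OF Kc]]) auto
  then have ae2: "AE s in completion \<mu>. (\<integral>\<^sup>+t. f t \<partial>(T s (\<rho> s))) = (\<integral>\<^sup>+t. g t \<partial>(T s (\<rho> s)))"
  proof eventually_elim
    case (elim s)
    have "space \<nu> = UNIV" using s\<nu> by (metis sets_eq_imp_space_eq space_borel)
    then have "\<And>t. t \<notin> N \<Longrightarrow> f t = g t" using N(2) by auto
    then show ?case using elim by (intro nn_integral_cong_AE) (auto elim: eventually_mono)
  qed
  have hm: "(\<lambda>s. \<integral>\<^sup>+t. g t \<partial>(T s (\<rho> s))) \<in> borel_measurable (completion \<mu>)"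
    using measurable_compose[OF measurable_prob_algebraD[OF Kc] nn_integral_measurable_subprob_algebra[OF gb]] .
  show "(\<lambda>s. \<integral>\<^sup>+t. f t \<partial>(T s (\<rho> s))) \<in> borel_measurable (completion \<mu>)"
    using ae_meas[OF hm ae2] .
qed

lemma um_path_cyl:
  fixes T :: "'s::polish_space \<Rightarrow> 'u::finite \<Rightarrow> 's measure"
  assumes cmp: "is_cmp T" and rho: "universally_measurable \<rho>"
  shows "(\<forall>k. A k \<in> sets borel) \<Longrightarrow> umeas (path_cyl T \<rho> n A)"
proof (induction n arbitrary: A)
  case 0
  show ?case unfolding umeas_def
  proof (intro allI impI)
    fix \<mu> :: "'s measure" assume "sets \<mu> = sets borel \<and> prob_space \<mu>"
    then have "A 0 \<in> sets (completion \<mu>)" using 0 by auto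
    moreover have "path_cyl T \<rho> 0 A = indicator (A 0)" by (rule ext) simp
    ultimately show "path_cyl T \<rho> 0 A \<in> borel_measurable (completion \<mu>)" by simp
  qed
next
  case (Suc n)
  have ih: "umeas (path_cyl T \<rho> n (\<lambda>k. A (Suc k)))" using Suc by auto
  have i: "umeas (\<lambda>s. \<integral>\<^sup>+t. path_cyl T \<rho> n (\<lambda>k. A (Suc k)) t \<partial>(T s (\<rho> s)))"
    by (rule um_int[OF cmp rho ih])
  show ?case unfolding umeas_def
  proof (intro allI impI)
    fix \<mu> :: "'s measure" assume a: "sets \<mu> = sets borel \<and> prob_space \<mu>"
    then have "A 0 \<in> sets (completion \<mu>)" using Suc by auto
    moreover have "(\<lambda>s. \<integral>\<^sup>+t. path_cyl T \<rho> n (\<lambda>k. A (Suc k)) t \<partial>(T s (\<rho> s))) \<in> borel_measurable (completion \<mu>)"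
      using i a by (simp add: umeas_def)
    moreover have "path_cyl T \<rho> (Suc n) A = (\<lambda>s. indicator (A 0) s * (\<integral>\<^sup>+t. path_cyl T \<rho> n (\<lambda>k. A (Suc k)) t \<partial>(T s (\<rho> s))))"
      by (rule ext) simp
    ultimately show "path_cyl T \<rho> (Suc n) A \<in> borel_measurable (completion \<mu>)"
      by (simp add: borel_measurable_indicator)
  qed
qed


lemma scyl_eq: "scylinder UNIV xs = {\<omega>. \<forall>k<length xs. \<omega> !! k \<in> xs ! k}"
proof (induction xs)
  case Nil then show ?case by simp
next
  case (Cons x xs)
  show ?case
  proof (intro set_eqI iffI)
    fix \<omega> assume "\<omega> \<in> scylinder UNIV (x # xs)"
    then show "\<omega> \<in> {\<omega>. \<forall>k<length (x # xs). \<omega> !! k \<in> (x # xs) ! k}"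
      using Cons by (auto simp: less_Suc_eq_0_disj)
  next
    fix \<omega> assume a: "\<omega> \<in> {\<omega>. \<forall>k<length (x # xs). \<omega> !! k \<in> (x # xs) ! k}"
    then have "shd \<omega> \<in> x" by (metis length_Cons mem_Collect_eq nth_Cons_0 snth.simps(1) zero_less_Suc)
    moreover have "stl \<omega> \<in> scylinder UNIV xs" using a Cons by auto
    ultimately show "\<omega> \<in> scylinder UNIV (x # xs)" by simp
  qed
qed

lemma scyl_snth: "scylinder UNIV (replicate i UNIV @ [A]) = {\<omega>. \<omega> !! i \<in> A}"
  by (induction i) auto

lemma sets_stream_scyl:
  "sets (stream_space (borel::'s::topological_space measure)) = sigma_sets UNIV (scylinder UNIV ` lists (sets borel))"
proof
  let ?N = "sigma (UNIV :: 's stream set) (scylinder UNIV ` lists (sets borel))"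
  have sN: "space ?N = UNIV" by (simp add: space_measure_of_conv)
  have "sets (stream_space (borel::'s measure)) \<subseteq> sets ?N"
  proof (rule sets_stream_space_in_sets)
    show "space ?N = streams (space borel)" using sN by simp
    fix i
    show "(\<lambda>x. x !! i) \<in> ?N \<rightarrow>\<^sub>M borel"
    proof (rule measurableI)
      fix A :: "'s set" assume A: "A \<in> sets borel"
      have "(\<lambda>x. x !! i) -` A \<inter> space ?N = scylinder UNIV (replicate i UNIV @ [A])"
        using sN scyl_snth by auto
      also have "\<dots> \<in> sets ?N"
      proof -
        have m: "scylinder UNIV (replicate i UNIV @ [A]) \<in> scylinder UNIV ` lists (sets borel)"
          using A by (intro imageI) auto
        show ?thesis using m by (subst sets_measure_of) (auto intro: sigma_sets.Basic)
      qed
      finally show "(\<lambda>x. x !! i) -` A \<inter> space ?N \<in> sets ?N" .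
    qed auto
  qed
  moreover have "sets ?N = sigma_sets UNIV (scylinder UNIV ` lists (sets borel))"
    by (rule sets_measure_of) auto
  ultimately show "sets (stream_space (borel::'s measure)) \<subseteq> sigma_sets UNIV (scylinder UNIV ` lists (sets borel))" by simp
next
  have "scylinder UNIV ` lists (sets borel) \<subseteq> sets (stream_space (borel::'s measure))"
    using sets_scylinder[where S="borel::'s measure"] by auto
  then have "sigma_sets (space (stream_space (borel::'s measure))) (scylinder UNIV ` lists (sets borel)) \<subseteq> sets (stream_space borel)"
    by (rule sets.sigma_sets_subset)
  then show "sigma_sets UNIV (scylinder UNIV ` lists (sets borel)) \<subseteq> sets (stream_space (borel::'s measure))"
    by (simp add: space_stream_space)
qed

lemma Int_stable_scyl: "Int_stable (scylinder UNIV ` lists (sets (borel::'s::topological_space measure)))"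
proof (rule Int_stableI_image)
  fix xs ys assume "xs \<in> lists (sets (borel::'s measure))" "ys \<in> lists (sets (borel::'s measure))"
  then show "\<exists>zs\<in>lists (sets borel). scylinder UNIV xs \<inter> scylinder UNIV ys = scylinder UNIV zs"
  proof (induction xs arbitrary: ys)
    case Nil then show ?case
      by (auto simp add: Int_absorb1 scylinder_streams)
  next
    case xs: (Cons x xs)
    show ?case
    proof (cases ys)
      case Nil with xs.hyps show ?thesis
        by (auto simp add: Int_absorb2 scylinder_streams intro!: bexI[of _ "x#xs"])
    next
      case ys: (Cons y ys')
      with xs.IH[of ys'] xs.prems obtain zs where
        "zs \<in> lists (sets borel)" and eq: "scylinder UNIV xs \<inter> scylinder UNIV ys' = scylinder UNIV zs"
        by auto
      show ?thesis
      proof (intro bexI[of _ "(x \<inter> y)#zs"])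
        show "x \<inter> y # zs \<in> lists (sets borel)"
          using \<open>zs\<in>lists (sets borel)\<close> xs ys by (auto intro: sets.Int)
        show "scylinder UNIV (x # xs) \<inter> scylinder UNIV ys = scylinder UNIV (x \<inter> y # zs)"
          by (auto simp add: eq[symmetric] ys)
      qed
    qed
  qed
qed


lemma all_le_Suc_split: "(\<forall>k\<le>Suc n. Q k) \<longleftrightarrow> Q 0 \<and> (\<forall>k\<le>n. Q (Suc k))"
proof
  assume "\<forall>k\<le>Suc n. Q k" then show "Q 0 \<and> (\<forall>k\<le>n. Q (Suc k))" by simp
next
  assume a: "Q 0 \<and> (\<forall>k\<le>n. Q (Suc k))"
  show "\<forall>k\<le>Suc n. Q k"
  proof (intro allI impI)
    fix k assume "k \<le> Suc n" then show "Q k" using a by (cases k) auto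
  qed
qed

lemma one_step:
  fixes T :: "'s::polish_space \<Rightarrow> 'u::finite \<Rightarrow> 's measure"
  assumes cmp: "is_cmp T" and rho: "universally_measurable \<rho>" and PM: "is_path_measure T \<rho> P"
    and D: "D \<in> sets (stream_space borel)" and z: "\<And>t. emeasure (P t) D = 0"
  shows "emeasure (P s) {\<omega> \<in> space (P s). stl \<omega> \<in> D} = 0"
proof -
  have sP: "\<And>t. sets (P t) = sets (stream_space borel)" and pP: "\<And>t. prob_space (P t)"
    and cylP: "\<And>t n A. (\<forall>k. A k \<in> sets borel) \<Longrightarrow>
       emeasure (P t) {\<omega> \<in> space (P t). \<forall>k\<le>n. \<omega> !! k \<in> A k} = path_cyl T \<rho> n A t"
    using PM unfolding is_path_measure_def by blast+
  have spP: "\<And>t. space (P t) = UNIV"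
    using sP by (metis sets_eq_imp_space_eq space_stream_space streams_UNIV space_borel)
  define K where "K = T s (\<rho> s)"
  have "(\<lambda>t. T t (\<rho> s)) \<in> borel \<rightarrow>\<^sub>M prob_algebra borel" using cmp by (simp add: is_cmp_def)
  then have "K \<in> space (prob_algebra borel)" unfolding K_def by (rule measurable_space) simp
  then have sK: "sets K = sets borel" and pK: "prob_space K" by (auto simp: space_prob_algebra)
  define M where "M = completion K"
  have M: "M \<in> space (prob_algebra M)"
    unfolding M_def using pK by (simp add: space_prob_algebra prob_space.prob_space_completion)
  define Ax where "Ax xs = (\<lambda>k. if k < length xs then xs ! k else UNIV)" for xs :: "'s set list"
  have Axb: "\<And>xs k. xs \<in> lists (sets borel) \<Longrightarrow> Ax xs k \<in> sets borel"
    unfolding Ax_def by (auto simp: in_lists_conv_set)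
  have cyl: "emeasure (P t) (scylinder UNIV xs) = path_cyl T \<rho> (length xs - 1) (Ax xs) t"
    if xs: "xs \<in> lists (sets borel)" "xs \<noteq> []" for t xs
  proof -
    have "scylinder UNIV xs = {\<omega> \<in> space (P t). \<forall>k\<le>length xs - 1. \<omega> !! k \<in> Ax xs k}"
    proof -
      have lenp: "\<And>k. (k \<le> length xs - 1) = (k < length xs)" using xs(2) by (cases xs) auto
      show ?thesis unfolding scyl_eq spP Ax_def lenp by auto
    qed
    then show ?thesis using cylP[of "Ax xs"] Axb[OF xs(1)] by simp
  qed
  have Pm: "P \<in> M \<rightarrow>\<^sub>M prob_algebra (stream_space borel)"
  proof (rule measurable_prob_algebra_generated[OF sets_stream_scyl Int_stable_scyl])
    show "scylinder UNIV ` lists (sets borel) \<subseteq> Pow UNIV" by auto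
    show "\<And>a. a \<in> space M \<Longrightarrow> prob_space (P a)" using pP .
    show "\<And>a. a \<in> space M \<Longrightarrow> sets (P a) = sets (stream_space borel)" using sP .
    fix X assume "X \<in> scylinder UNIV ` lists (sets (borel::'s measure))"
    then obtain xs where xs: "xs \<in> lists (sets borel)" "X = scylinder UNIV xs" by auto
    show "(\<lambda>a. emeasure (P a) X) \<in> borel_measurable M"
    proof (cases "xs = []")
      case True
      then have "\<And>a. emeasure (P a) X = 1" using xs prob_space.emeasure_space_1[OF pP] spP by simp
      then show ?thesis by simp
    next
      case False
      have "umeas (path_cyl T \<rho> (length xs - 1) (Ax xs))"
        using um_path_cyl[OF cmp rho] Axb[OF xs(1)] by blast
      then have "path_cyl T \<rho> (length xs - 1) (Ax xs) \<in> borel_measurable M"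
        unfolding umeas_def M_def using sK pK by blast
      then show ?thesis using cyl[OF xs(1) False] xs(2) by simp
    qed
  qed
  define N1 where "N1 = bind M P"
  define N2 where "N2 = distr (P s) (stream_space borel) stl"
  have stl_m: "stl \<in> P s \<rightarrow>\<^sub>M stream_space borel"
    using measurable_stl[where M="borel::'s measure"] by (simp cong: measurable_cong_sets add: sP)
  have "N1 = N2"
  proof (rule stream_space_eq_scylinder[where S=borel and G="sets borel" and C="{UNIV}"])
    show "prob_space N1" unfolding N1_def by (rule prob_space_bind'[OF M Pm])
    show "prob_space N2" unfolding N2_def by (rule prob_space.prob_space_distr[OF pP stl_m])
    show "Int_stable (sets (borel::'s measure))" by (auto simp: Int_stable_def)
    show "sets (borel::'s measure) = sets (sigma (space borel) (sets borel))"
      using sets.sigma_sets_eq[of "borel::'s measure"] by simp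
    show "countable {UNIV::'s set}" by simp
    show "{UNIV} \<subseteq> sets (borel::'s measure)" by simp
    show "\<Union>{UNIV} = space (borel::'s measure)" by simp
    show "sets borel \<subseteq> Pow (space (borel::'s measure))" by simp
    show "sets N1 = sets (stream_space borel)" unfolding N1_def by (rule sets_bind'[OF M Pm])
    show "sets N2 = sets (stream_space borel)" unfolding N2_def by simp
    fix xs :: "'s set list" assume xs: "xs \<noteq> []" "xs \<in> lists (sets borel)"
    have sc: "scylinder UNIV xs \<in> sets (stream_space borel)"
      using sets_scylinder[of xs "borel::'s measure"] xs by auto
    have "emeasure N1 (scylinder (space borel) xs) = (\<integral>\<^sup>+t. emeasure (P t) (scylinder UNIV xs) \<partial>M)"
      unfolding N1_def using emeasure_bind_prob_algebra[OF M Pm sc] by simp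
    also have "\<dots> = (\<integral>\<^sup>+t. path_cyl T \<rho> (length xs - 1) (Ax xs) t \<partial>K)"
      unfolding M_def nn_integral_completion using cyl[OF xs(2) xs(1)] by simp
    also have "\<dots> = path_cyl T \<rho> (Suc (length xs - 1)) (case_nat UNIV (Ax xs)) s"
      by (simp add: K_def)
    also have "\<dots> = emeasure (P s) {\<omega> \<in> space (P s). \<forall>k\<le>Suc (length xs - 1). \<omega> !! k \<in> case_nat UNIV (Ax xs) k}"
      using cylP[of "case_nat UNIV (Ax xs)"] Axb[OF xs(2)] by (simp split: nat.split)
    also have "{\<omega> \<in> space (P s). \<forall>k\<le>Suc (length xs - 1). \<omega> !! k \<in> case_nat UNIV (Ax xs) k}
        = stl -` scylinder UNIV xs \<inter> space (P s)"
    proof -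
      have "scylinder UNIV xs = {\<omega>. \<forall>k\<le>length xs - 1. \<omega> !! k \<in> Ax xs k}"
      proof -
        have lenp: "\<And>k. (k \<le> length xs - 1) = (k < length xs)" using xs(1) by (cases xs) auto
        show ?thesis unfolding scyl_eq Ax_def lenp by auto
      qed
      then show ?thesis unfolding all_le_Suc_split spP by simp
    qed
    also have "emeasure (P s) (stl -` scylinder UNIV xs \<inter> space (P s)) = emeasure N2 (scylinder (space borel) xs)"
      unfolding N2_def using sc stl_m by (simp add: emeasure_distr)
    finally show "emeasure N1 (scylinder (space borel) xs) = emeasure N2 (scylinder (space borel) xs)" .
  qed
  have "emeasure (P s) {\<omega> \<in> space (P s). stl \<omega> \<in> D} = emeasure N2 D"
    unfolding N2_def using D stl_m by (simp add: emeasure_distr vimage_def Int_def conj_commute)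
  also have "\<dots> = emeasure N1 D" using \<open>N1 = N2\<close> by simp
  also have "\<dots> = (\<integral>\<^sup>+t. emeasure (P t) D \<partial>M)"
    unfolding N1_def using emeasure_bind_prob_algebra[OF M Pm D] by simp
  also have "\<dots> = 0" using z by simp
  finally show ?thesis .
qed

lemma parity_pt:
  assumes "\<forall>i. odd i \<and> 1 \<le> i \<and> i \<le> l \<longrightarrow> (\<forall>n. \<not> (\<omega> !! n \<in> B i \<and> \<not> ev_escape l B i (sdrop n \<omega>)))"
  shows "parity l B \<omega>"
  unfolding parity_def
proof (intro allI impI)
  fix i assume i: "odd i \<and> 1 \<le> i \<and> i \<le> l" and inf: "\<exists>\<^sub>\<infinity>n. \<omega> !! n \<in> B i"
  show "\<exists>j. even j \<and> i < j \<and> j \<le> l \<and> (\<exists>\<^sub>\<infinity>n. \<omega> !! n \<in> B j)"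
  proof (rule ccontr)
    assume "\<not> ?thesis"
    then have "\<forall>j\<in>{j. even j \<and> i < j \<and> j \<le> l}. \<forall>\<^sub>\<infinity>n. \<omega> !! n \<notin> B j"
      by (auto simp: not_frequently)
    then have "\<forall>\<^sub>\<infinity>n. \<forall>j\<in>{j. even j \<and> i < j \<and> j \<le> l}. \<omega> !! n \<notin> B j"
      by (intro eventually_ball_finite) auto
    then obtain m where m: "\<And>n j. m < n \<Longrightarrow> even j \<Longrightarrow> i < j \<Longrightarrow> j \<le> l \<Longrightarrow> \<omega> !! n \<notin> B j"
      unfolding MOST_nat by auto
    from inf obtain n where n: "m < n" "\<omega> !! n \<in> B i" unfolding INFM_nat by blast
    then have "ev_escape l B i (sdrop n \<omega>)" using assms i by blast
    then obtain k where k: "(\<forall>m'\<ge>k. sdrop n \<omega> !! m' \<notin> B i) \<or>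
        (\<exists>j. even j \<and> i < j \<and> j \<le> l \<and> sdrop n \<omega> !! k \<in> B j)"
      unfolding ev_escape_def by blast
    then show False
    proof
      assume a: "\<forall>m'\<ge>k. sdrop n \<omega> !! m' \<notin> B i"
      from inf obtain n' where n': "n + k < n'" "\<omega> !! n' \<in> B i" unfolding INFM_nat by blast
      have "sdrop n \<omega> !! (n' - n) \<notin> B i" using a n'(1) by simp
      then show False using n' by (simp add: sdrop_snth)
    next
      assume "\<exists>j. even j \<and> i < j \<and> j \<le> l \<and> sdrop n \<omega> !! k \<in> B j"
      then obtain j where "even j" "i < j" "j \<le> l" "\<omega> !! (n + k) \<in> B j" by (auto simp: sdrop_snth)
      then show False using m[of "n + k" j] n(1) by simp
    qed
  qed
qed

theorem lemma2:
  fixes T :: "'s::polish_space \<Rightarrow> 'u::finite \<Rightarrow> 's measure"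
    and \<rho> :: "'s \<Rightarrow> 'u"
    and P :: "'s \<Rightarrow> 's stream measure"
    and l :: nat and B :: "nat \<Rightarrow> 's set" and s0 :: 's
  assumes "is_cmp T"
    and "universally_measurable \<rho>"
    and "is_path_measure T \<rho> P"
    and "is_meas_partition l B"
    and "\<forall>path :: 's list. path \<noteq> [] \<and> hd path = s0 \<longrightarrow>
           (\<forall>i. odd i \<and> 1 \<le> i \<and> i \<le> l \<longrightarrow> last path \<in> B i \<longrightarrow>
              measure (P (last path)) {\<omega> \<in> space (P (last path)). ev_escape l B i \<omega>} = 1)"
  shows "measure (P s0) {\<omega> \<in> space (P s0). parity l B \<omega>} = 1"
proof -
  note cmp = assms(1) and rho = assms(2) and PM = assms(3)
  have sP: "\<And>t. sets (P t) = sets (stream_space borel)" and pP: "\<And>t. prob_space (P t)"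
    and cylP: "\<And>t n A. (\<forall>k. A k \<in> sets borel) \<Longrightarrow>
       emeasure (P t) {\<omega> \<in> space (P t). \<forall>k\<le>n. \<omega> !! k \<in> A k} = path_cyl T \<rho> n A t"
    using PM unfolding is_path_measure_def by blast+
  have spP: "\<And>t. space (P t) = UNIV"
    using sP by (metis sets_eq_imp_space_eq space_stream_space streams_UNIV space_borel)
  have Pset: "\<And>t Q. Measurable.pred (stream_space (borel::'s measure)) Q \<Longrightarrow> {\<omega> \<in> space (P t). Q \<omega>} \<in> sets (P t)"
  proof -
    fix t Q assume "Measurable.pred (stream_space (borel::'s measure)) Q"
    then have "{\<omega> \<in> space (stream_space (borel::'s measure)). Q \<omega>} \<in> sets (stream_space (borel::'s measure))" by (simp add: pred_def)
    then show "{\<omega> \<in> space (P t). Q \<omega>} \<in> sets (P t)" using sP[of t] sets_eq_imp_space_eq[OF sP[of t]] by simp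
  qed
  have Bm: "\<And>i. 1 \<le> i \<Longrightarrow> i \<le> l \<Longrightarrow> B i \<in> sets borel"
    using assms(4) by (simp add: is_meas_partition_def)
  have hyp: "\<And>s i. odd i \<Longrightarrow> 1 \<le> i \<Longrightarrow> i \<le> l \<Longrightarrow> s \<in> B i \<Longrightarrow>
      measure (P s) {\<omega> \<in> space (P s). ev_escape l B i \<omega>} = 1"
  proof -
    fix s i assume "odd i" "1 \<le> i" "i \<le> l" "s \<in> B i"
    then show "measure (P s) {\<omega> \<in> space (P s). ev_escape l B i \<omega>} = 1"
      using assms(5)[rule_format, of "[s0, s]" i] by simp
  qed
  have evm: "Measurable.pred (stream_space borel) (ev_escape l B i)" if i: "1 \<le> i" "i \<le> l" for i
  proof -
    have Bi: "B i \<in> sets borel" using Bm i by simp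
    have b: "Measurable.pred (stream_space borel) (\<lambda>\<omega>. even j \<and> i < j \<and> j \<le> l \<and> \<omega> !! k \<in> B j)" for j k
      apply (rule pred_intros_conj1')+
      apply (rule pred_sets2[OF _ measurable_snth])
      using Bm i by auto
    show ?thesis unfolding ev_escape_def
      apply (rule pred_intros_countable(2))
      apply (rule pred_intros_logic(5))
       apply (rule pred_intros_countable(1))
       apply (rule pred_intros_imp')
       apply (rule pred_intros_logic(2))
       apply (rule pred_sets2[OF Bi measurable_snth])
      apply (rule pred_intros_countable(2))
      apply (rule b)
      done
  qed
  have parm: "Measurable.pred (stream_space borel) (parity l B)"
  proof -
    have io: "Measurable.pred (stream_space borel) (\<lambda>\<omega>. \<forall>m. \<exists>n. m < n \<and> \<omega> !! n \<in> B j)"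
      if "1 \<le> j" "j \<le> l" for j
      apply (rule pred_intros_countable(1))
      apply (rule pred_intros_countable(2))
      apply (rule pred_intros_conj1')
      apply (rule pred_sets2[OF _ measurable_snth])
      using Bm that by auto
    show ?thesis unfolding parity_def INFM_nat
      apply (rule pred_intros_countable(1))
      apply (rule pred_intros_imp')
      apply (rule pred_intros_logic(4))
       apply (rule io; simp)
      apply (rule pred_intros_countable(2))
      apply (rule pred_intros_conj1')+
      apply (rule io; simp)
      done
  qed
  define D where "D i n = {\<omega> :: 's stream. \<omega> !! n \<in> B i \<and> \<not> ev_escape l B i (sdrop n \<omega>)}" for i n
  have Dm: "D i n \<in> sets (stream_space borel)" if i: "1 \<le> i" "i \<le> l" for i n
  proof -
    have Bi: "B i \<in> sets borel" using Bm i by simp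
    have "Measurable.pred (stream_space borel) (\<lambda>\<omega>. \<omega> !! n \<in> B i \<and> \<not> ev_escape l B i (sdrop n \<omega>))"
      apply (rule pred_intros_logic(3))
       apply (rule pred_sets2[OF Bi measurable_snth])
      apply (rule pred_intros_logic(2))
      apply (rule measurable_compose[OF measurable_sdrop evm[OF i]])
      done
    then have "{\<omega> \<in> space (stream_space borel). \<omega> !! n \<in> B i \<and> \<not> ev_escape l B i (sdrop n \<omega>)} \<in> sets (stream_space borel)"
      by (simp add: pred_def)
    then show ?thesis by (simp add: D_def space_stream_space)
  qed
  have claim: "emeasure (P s) (D i n) = 0" if i: "odd i" "1 \<le> i" "i \<le> l" for i n s
  proof (induction n arbitrary: s)
    case 0
    show ?case
    proof (cases "s \<in> B i")
      case True
      interpret ps: prob_space "P s" by (rule pP)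
      have E: "{\<omega> \<in> space (P s). ev_escape l B i \<omega>} \<in> sets (P s)"
        using Pset[OF evm[OF i(2,3)]] .
      have "measure (P s) (space (P s) - {\<omega> \<in> space (P s). ev_escape l B i \<omega>}) = 0"
        using ps.prob_compl[OF E] hyp[OF i True] by simp
      then have z: "emeasure (P s) (space (P s) - {\<omega> \<in> space (P s). ev_escape l B i \<omega>}) = 0"
        using E by (simp add: ps.emeasure_eq_measure)
      have "D i 0 \<subseteq> space (P s) - {\<omega> \<in> space (P s). ev_escape l B i \<omega>}"
        by (auto simp: D_def spP)
      moreover have "space (P s) - {\<omega> \<in> space (P s). ev_escape l B i \<omega>} \<in> sets (P s)"
        using E by auto
      ultimately have "emeasure (P s) (D i 0) \<le> emeasure (P s) (space (P s) - {\<omega> \<in> space (P s). ev_escape l B i \<omega>})"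
        by (rule emeasure_mono)
      then show ?thesis using z by simp
    next
      case False
      define A0 where "A0 = (\<lambda>_::nat. B i)"
      have A0b: "\<forall>k. A0 k \<in> sets borel" unfolding A0_def using Bm[OF i(2,3)] by blast
      have c: "emeasure (P s) {\<omega> \<in> space (P s). \<forall>k\<le>0. \<omega> !! k \<in> A0 k} = path_cyl T \<rho> 0 A0 s"
        by (rule cylP[OF A0b])
      have c0: "path_cyl T \<rho> 0 A0 s = 0" unfolding A0_def using False by simp
      have sub: "D i 0 \<subseteq> {\<omega> \<in> space (P s). \<forall>k\<le>0. \<omega> !! k \<in> A0 k}"
        unfolding D_def A0_def spP by auto
      have ms: "{\<omega> \<in> space (P s). \<forall>k\<le>0. \<omega> !! k \<in> A0 k} \<in> sets (P s)"
      proof (rule Pset)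
        have [measurable]: "B i \<in> sets borel" using Bm[OF i(2,3)] .
        have "(\<lambda>\<omega>::'s stream. \<forall>k\<le>0. \<omega> !! k \<in> A0 k) = (\<lambda>\<omega>. \<omega> !! 0 \<in> B i)"
          unfolding A0_def by auto
        moreover have "Measurable.pred (stream_space borel) (\<lambda>\<omega>::'s stream. \<omega> !! 0 \<in> B i)" by measurable
        ultimately show "Measurable.pred (stream_space borel) (\<lambda>\<omega>::'s stream. \<forall>k\<le>0. \<omega> !! k \<in> A0 k)" by simp
      qed
      have "emeasure (P s) (D i 0) \<le> emeasure (P s) {\<omega> \<in> space (P s). \<forall>k\<le>0. \<omega> !! k \<in> A0 k}"
        using sub ms by (rule emeasure_mono)
      then show ?thesis using c c0 by simp
    qed
  next
    case (Suc n)
    have "D i (Suc n) = {\<omega> \<in> space (P s). stl \<omega> \<in> D i n}"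
      by (auto simp: D_def spP)
    then show ?case using one_step[OF cmp rho PM Dm[OF i(2,3)] Suc.IH] by simp
  qed
  interpret p0: prob_space "P s0" by (rule pP)
  have "AE \<omega> in P s0. \<forall>i\<in>{i. odd i \<and> 1 \<le> i \<and> i \<le> l}. \<forall>n. \<omega> \<notin> D i n"
  proof (intro AE_ball_countable' AE_all_countable[THEN iffD2] allI)
    show "countable {i. odd i \<and> 1 \<le> i \<and> i \<le> l}" by simp
    fix i n assume i: "i \<in> {i. odd i \<and> 1 \<le> i \<and> i \<le> l}"
    have "D i n \<in> null_sets (P s0)"
      using claim[where i=i and n=n and s=s0] Dm[of i n] i sP by (auto intro!: null_setsI)
    then show "AE \<omega> in P s0. \<omega> \<notin> D i n" by (rule AE_not_in)
  qed
  then have "AE \<omega> in P s0. parity l B \<omega>"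
    by eventually_elim (rule parity_pt, auto simp: D_def)
  moreover have "{\<omega> \<in> space (P s0). parity l B \<omega>} \<in> sets (P s0)"
    using Pset[OF parm] .
  ultimately show ?thesis using p0.prob_Collect_eq_1 by simp
qed


end
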